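(* Let $\beta$, $\Omega$, $\mathcal H_\eta$ and $a_{s\beta,\eta}$ be as in the context. There is $\varepsilon(\beta)\in(0,1)$ such that for all $\varepsilon\in(0,\varepsilon(\beta))$, $\eta\in[-\pi,\pi]$ and $U\in\mathcal H_\eta$, $$a_{\varepsilon\beta,\eta}[U]\ge\tfrac12\|\nabla U\|_\Omega^2.$$
   Context: $\omega\subset\mathbb{R}^2$ is a bounded domain with piecewise $C^2$ boundary without cusps; $\gamma_D\subset\partial\omega$ is a finite union of arcs of positive measure. $\partial_\varphi=x_1\partial_2-x_2\partial_1$. $\beta\in C^2(\mathbb{R})$ has positive $1$-periodic derivative $\dot\beta$. $\Omega=\omega\times(0,1)$; for $\eta\in[-\pi,\pi]$, $\mathcal H_\eta$ is the space of $U\in H^1(\Omega)$ vanishing on $\gamma_D\times(0,1)$ with $U(x',1)=e^{i\eta}U(x',0)$. For $s\in\mathbb{R}$, $a_{s\beta,\eta}[U]=\int_\Omega\big(|\nabla'U|^2+|(\partial_3+s\dot\beta(x_3)\partial_\varphi)U|^2\big)\mathrm{d}x$, $U\in\mathcal H_\eta$; $\|\cdot\|_\Omega$ is the $L^2(\Omega)$ norm. *)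

theory Defs
  imports "HOL-Analysis.Analysis"
begin

fun Ck :: "nat \<Rightarrow> ('a::real_normed_vector \<Rightarrow> 'b::real_normed_vector) \<Rightarrow> bool" where
  "Ck 0 f = continuous_on UNIV f"
| "Ck (Suc k) f = ((\<forall>x. f differentiable (at x)) \<and>
                    (\<forall>e. Ck k (\<lambda>x. frechet_derivative f (at x) e)))"

definition smooth_fun :: "('a::real_normed_vector \<Rightarrow> 'b::real_normed_vector) \<Rightarrow> bool" where
  "smooth_fun f \<longleftrightarrow> (\<forall>k. Ck k f)"

definition pd :: "('a::real_normed_vector \<Rightarrow> 'b::real_normed_vector) \<Rightarrow> 'a \<Rightarrow> 'a \<Rightarrow> 'b" where
  "pd f e x = frechet_derivative f (at x) e"

text \<open>A regular, piecewise C^2 simple closed curve on [0,1] without cusps: breakpoints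
  p 0 = 0 < p 1 < ... < p m = 1, on [p k, p (k+1)] the curve coincides with a C^2 map
  f k having non-vanishing derivative; at each breakpoint (including the closing point
  0 = 1) the one-sided tangents are not opposite (no cusp).\<close>
definition pw_C2_closed_curve :: "(real \<Rightarrow> real^2) \<Rightarrow> bool" where
  "pw_C2_closed_curve c \<longleftrightarrow> simple_path c \<and> pathstart c = pathfinish c \<and>
     (\<exists>m::nat. \<exists>p::nat \<Rightarrow> real. \<exists>f::nat \<Rightarrow> real \<Rightarrow> real^2.
        m \<ge> 1 \<and> p 0 = 0 \<and> p m = 1 \<and> (\<forall>k<m. p k < p (Suc k)) \<and>
        (\<forall>k<m. Ck 2 (f k) \<and>
               (\<forall>t\<in>{p k..p (Suc k)}. c t = f k t \<and> vector_derivative (f k) (at t) \<noteq> 0)) \<and>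
        (\<forall>k. 1 \<le> k \<and> k < m \<longrightarrow>
            \<not> (\<exists>l>0. vector_derivative (f (k - 1)) (at (p k))
                      = - l *\<^sub>R vector_derivative (f k) (at (p k)))) \<and>
        \<not> (\<exists>l>0. vector_derivative (f (m - 1)) (at 1) = - l *\<^sub>R vector_derivative (f 0) (at 0)))"

text \<open>The standing assumptions: omega is a bounded domain whose boundary is a finite
  disjoint union of regular piecewise C^2 closed curves without cusps, and gamma_D is a
  (nonempty) finite union of nondegenerate arcs of these boundary curves.\<close>
definition admissible_domain :: "(real^2) set \<Rightarrow> (real^2) set \<Rightarrow> bool" where
  "admissible_domain \<omega> \<gamma>D \<longleftrightarrow>
     open \<omega> \<and> connected \<omega> \<and> bounded \<omega> \<and> \<omega> \<noteq> {} \<and>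
     (\<exists>N::nat. \<exists>c::nat \<Rightarrow> real \<Rightarrow> real^2.
        N \<ge> 1 \<and> (\<forall>i<N. pw_C2_closed_curve (c i)) \<and>
        (\<forall>i<N. \<forall>j<N. i \<noteq> j \<longrightarrow> path_image (c i) \<inter> path_image (c j) = {}) \<and>
        frontier \<omega> = (\<Union>i<N. path_image (c i)) \<and>
        (\<exists>M::nat. \<exists>I::nat \<Rightarrow> nat. \<exists>a b :: nat \<Rightarrow> real.
           M \<ge> 1 \<and> (\<forall>j<M. I j < N \<and> a j < b j \<and> b j \<le> a j + 1) \<and>
           \<gamma>D = (\<Union>j<M. (\<lambda>t. c (I j) (frac t)) ` {a j..b j})))"

type_synonym pt = "(real^2) \<times> real"

definition Cyl :: "(real^2) set \<Rightarrow> pt set" where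
  "Cyl \<omega> = \<omega> \<times> {0<..<1}"

definition e1 :: pt where "e1 = (axis 1 1, 0)"
definition e2 :: pt where "e2 = (axis 2 1, 0)"
definition e3 :: pt where "e3 = (0, 1)"

definition L2_on :: "pt set \<Rightarrow> (pt \<Rightarrow> complex) \<Rightarrow> bool" where
  "L2_on \<Omega> U \<longleftrightarrow> set_borel_measurable lborel \<Omega> U \<and>
                   set_integrable lborel \<Omega> (\<lambda>x. (cmod (U x))\<^sup>2)"

definition test_fun :: "pt set \<Rightarrow> (pt \<Rightarrow> real) \<Rightarrow> bool" where
  "test_fun \<Omega> \<phi> \<longleftrightarrow> smooth_fun \<phi> \<and> compact (closure {x. \<phi> x \<noteq> 0}) \<and>
                      closure {x. \<phi> x \<noteq> 0} \<subseteq> \<Omega>"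

definition weak_deriv :: "pt set \<Rightarrow> (pt \<Rightarrow> complex) \<Rightarrow> pt \<Rightarrow> (pt \<Rightarrow> complex) \<Rightarrow> bool" where
  "weak_deriv \<Omega> U e g \<longleftrightarrow>
     (\<forall>\<phi>. test_fun \<Omega> \<phi> \<longrightarrow>
        (LINT x:\<Omega>|lborel. U x * complex_of_real (pd \<phi> e x))
          = - (LINT x:\<Omega>|lborel. g x * complex_of_real (\<phi> x)))"

definition H1_grad :: "pt set \<Rightarrow> (pt \<Rightarrow> complex) \<Rightarrow> (pt \<Rightarrow> complex) \<Rightarrow> (pt \<Rightarrow> complex)
                        \<Rightarrow> (pt \<Rightarrow> complex) \<Rightarrow> bool" where
  "H1_grad \<Omega> U G1 G2 G3 \<longleftrightarrow> L2_on \<Omega> U \<and> L2_on \<Omega> G1 \<and> L2_on \<Omega> G2 \<and> L2_on \<Omega> G3 \<and>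
     weak_deriv \<Omega> U e1 G1 \<and> weak_deriv \<Omega> U e2 G2 \<and> weak_deriv \<Omega> U e3 G3"

text \<open>The space H_eta: elements of H^1(\<Omega>) which are H^1-limits of smooth functions
  vanishing on gamma_D x [0,1] and satisfying u(x',1) = e^{i eta} u(x',0); i.e. whose
  traces vanish on gamma_D x (0,1) and satisfy the quasi-periodicity condition.\<close>
definition H_eta :: "(real^2) set \<Rightarrow> (real^2) set \<Rightarrow> real \<Rightarrow> (pt \<Rightarrow> complex) set" where
  "H_eta \<omega> \<gamma>D \<eta> = {U. \<exists>G1 G2 G3. H1_grad (Cyl \<omega>) U G1 G2 G3 \<and>
     (\<exists>u :: nat \<Rightarrow> pt \<Rightarrow> complex.
        (\<forall>n. smooth_fun (u n) \<and>
             (\<forall>y\<in>\<gamma>D. \<forall>t\<in>{0..1}. u n (y, t) = 0) \<and>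
             (\<forall>y\<in>closure \<omega>. u n (y, 1) = cis \<eta> * u n (y, 0))) \<and>
        (\<lambda>n. (LINT x:Cyl \<omega>|lborel. (cmod (u n x - U x))\<^sup>2)
           + (LINT x:Cyl \<omega>|lborel. (cmod (pd (u n) e1 x - G1 x))\<^sup>2)
           + (LINT x:Cyl \<omega>|lborel. (cmod (pd (u n) e2 x - G2 x))\<^sup>2)
           + (LINT x:Cyl \<omega>|lborel. (cmod (pd (u n) e3 x - G3 x))\<^sup>2)) \<longlonglongrightarrow> 0)}"

text \<open>The quadratic form a_{s beta, eta}[U], written through the weak gradient (G1,G2,G3),
  with \<partial>_phi U = x1 G2 - x2 G1; bd is the derivative \<dot>\<beta>.\<close>
definition a_form :: "(real^2) set \<Rightarrow> real \<Rightarrow> (real \<Rightarrow> real) \<Rightarrow> (pt \<Rightarrow> complex)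
                       \<Rightarrow> (pt \<Rightarrow> complex) \<Rightarrow> (pt \<Rightarrow> complex) \<Rightarrow> real" where
  "a_form \<omega> s bd G1 G2 G3 = (LINT x:Cyl \<omega>|lborel.
      (cmod (G1 x))\<^sup>2 + (cmod (G2 x))\<^sup>2 +
      (cmod (G3 x + complex_of_real (s * bd (snd x)) *
               (complex_of_real (fst x $ 1) * G2 x - complex_of_real (fst x $ 2) * G1 x)))\<^sup>2)"

definition grad_norm_sq :: "(real^2) set \<Rightarrow> (pt \<Rightarrow> complex) \<Rightarrow> (pt \<Rightarrow> complex)
                             \<Rightarrow> (pt \<Rightarrow> complex) \<Rightarrow> real" where
  "grad_norm_sq \<omega> G1 G2 G3 =
     (LINT x:Cyl \<omega>|lborel. (cmod (G1 x))\<^sup>2 + (cmod (G2 x))\<^sup>2 + (cmod (G3 x))\<^sup>2)"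

end

theory Submission
  imports Defs
begin

lemma pw:
  fixes g1 g2 g3 :: complex and c y1 y2 :: real
  assumes "\<bar>c*y1\<bar> \<le> 1/2" "\<bar>c*y2\<bar> \<le> 1/2"
  shows "(1/2)*((cmod g1)\<^sup>2+(cmod g2)\<^sup>2+(cmod g3)\<^sup>2) \<le>
      (cmod g1)\<^sup>2+(cmod g2)\<^sup>2+(cmod (g3 + complex_of_real c * (complex_of_real y1 * g2 - complex_of_real y2 * g1)))\<^sup>2"
    and "(cmod g1)\<^sup>2+(cmod g2)\<^sup>2+(cmod (g3 + complex_of_real c * (complex_of_real y1 * g2 - complex_of_real y2 * g1)))\<^sup>2
       \<le> 2*((cmod g1)\<^sup>2+(cmod g2)\<^sup>2+(cmod g3)\<^sup>2)"
proof -
  define b where "b = complex_of_real c * (complex_of_real y1 * g2 - complex_of_real y2 * g1)"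
  have "b = complex_of_real (c*y1) * g2 - complex_of_real (c*y2) * g1"
    unfolding b_def by (simp add: algebra_simps)
  hence "cmod b \<le> \<bar>c*y1\<bar> * cmod g2 + \<bar>c*y2\<bar> * cmod g1"
    by (metis norm_mult norm_of_real norm_triangle_ineq4 order_trans add_mono order_refl)
  also have "\<dots> \<le> 1/2 * cmod g2 + 1/2 * cmod g1"
    using assms by (intro add_mono mult_right_mono) auto
  finally have nb: "cmod b \<le> 1/2 * cmod g2 + 1/2 * cmod g1" .
  have "(cmod b)\<^sup>2 \<le> (1/2 * cmod g2 + 1/2 * cmod g1)\<^sup>2"
    using nb by (intro power_mono) auto
  also have "\<dots> \<le> 1/2 * ((cmod g1)\<^sup>2 + (cmod g2)\<^sup>2)"
  proof -
    have "0 \<le> (cmod g1 - cmod g2)\<^sup>2" by simp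
    thus ?thesis by (simp add: power2_eq_square algebra_simps)
  qed
  finally have b2: "(cmod b)\<^sup>2 \<le> 1/2 * ((cmod g1)\<^sup>2 + (cmod g2)\<^sup>2)" .
  have t1: "cmod g3 \<le> cmod (g3 + b) + cmod b"
    by (metis add_diff_cancel_right' norm_triangle_ineq4)
  have t2: "cmod (g3 + b) \<le> cmod g3 + cmod b" by (rule norm_triangle_ineq)
  have "(cmod g3)\<^sup>2 \<le> 2*(cmod (g3+b))\<^sup>2 + 2*(cmod b)\<^sup>2"
  proof -
    have "(cmod g3)\<^sup>2 \<le> (cmod (g3 + b) + cmod b)\<^sup>2" using t1 by (intro power_mono) auto
    also have "\<dots> \<le> 2*(cmod (g3+b))\<^sup>2 + 2*(cmod b)\<^sup>2"
    proof -
      have "0 \<le> (cmod g3 - cmod b)\<^sup>2" "0 \<le> (cmod (g3+b) - cmod b)\<^sup>2" by simp_all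
      thus ?thesis by (simp add: power2_eq_square algebra_simps)
    qed
    finally show ?thesis .
  qed
  then show "(1/2)*((cmod g1)\<^sup>2+(cmod g2)\<^sup>2+(cmod g3)\<^sup>2) \<le>
      (cmod g1)\<^sup>2+(cmod g2)\<^sup>2+(cmod (g3 + complex_of_real c * (complex_of_real y1 * g2 - complex_of_real y2 * g1)))\<^sup>2"
    using b2 unfolding b_def[symmetric] by simp
  have "(cmod (g3+b))\<^sup>2 \<le> 2*(cmod g3)\<^sup>2 + 2*(cmod b)\<^sup>2"
  proof -
    have "(cmod (g3+b))\<^sup>2 \<le> (cmod g3 + cmod b)\<^sup>2" using t2 by (intro power_mono) auto
    also have "\<dots> \<le> 2*(cmod g3)\<^sup>2 + 2*(cmod b)\<^sup>2"
    proof -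
      have "0 \<le> (cmod g3 - cmod b)\<^sup>2" "0 \<le> (cmod (g3+b) - cmod b)\<^sup>2" by simp_all
      thus ?thesis by (simp add: power2_eq_square algebra_simps)
    qed
    finally show ?thesis .
  qed
  then show "(cmod g1)\<^sup>2+(cmod g2)\<^sup>2+(cmod (g3 + complex_of_real c * (complex_of_real y1 * g2 - complex_of_real y2 * g1)))\<^sup>2
       \<le> 2*((cmod g1)\<^sup>2+(cmod g2)\<^sup>2+(cmod g3)\<^sup>2)"
    using b2 unfolding b_def[symmetric] by simp
qed

theorem corollary3:
  fixes \<omega> \<gamma>D :: "(real^2) set" and \<beta> bd bdd :: "real \<Rightarrow> real"
  assumes "admissible_domain \<omega> \<gamma>D"
    and "\<forall>x. (\<beta> has_real_derivative bd x) (at x)"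
    and "\<forall>x. (bd has_real_derivative bdd x) (at x)"
    and "continuous_on UNIV bdd"
    and "\<forall>x. bd x > 0"
    and "\<forall>x. bd (x + 1) = bd x"
  shows "\<exists>\<epsilon>0. 0 < \<epsilon>0 \<and> \<epsilon>0 < 1 \<and>
    (\<forall>\<epsilon> \<eta> U G1 G2 G3. 0 < \<epsilon> \<and> \<epsilon> < \<epsilon>0 \<and> - pi \<le> \<eta> \<and> \<eta> \<le> pi \<and>
       U \<in> H_eta \<omega> \<gamma>D \<eta> \<and> H1_grad (Cyl \<omega>) U G1 G2 G3 \<longrightarrow>
       a_form \<omega> \<epsilon> bd G1 G2 G3 \<ge> 1/2 * grad_norm_sq \<omega> G1 G2 G3)"
proof -
  have "bounded \<omega>" using assms(1) unfolding admissible_domain_def by blast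
  then obtain R where R: "R > 0" "\<And>y. y \<in> \<omega> \<Longrightarrow> norm y \<le> R"
    using bounded_pos by blast
  have cbd: "continuous_on UNIV bd"
    using assms(3) by (meson DERIV_isCont continuous_at_imp_continuous_on)
  have "bounded (bd ` {0..1})"
    by (intro compact_imp_bounded compact_continuous_image continuous_on_subset[OF cbd]) auto
  then obtain B where B: "B > 0" "\<And>t. t \<in> {0..1} \<Longrightarrow> norm (bd t) \<le> B"
    using bounded_pos by (metis image_eqI)
  define e0 where "e0 = 1/(2*(B*R+1))"
  have BR: "B*R > 0" using B R by simp
  have e0: "0 < e0" "e0 < 1" using BR unfolding e0_def by (auto simp: field_simps)
  show ?thesis
  proof (intro exI[of _ e0] conjI e0 allI impI)
    fix \<epsilon> \<eta> U G1 G2 G3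
    assume H: "0 < \<epsilon> \<and> \<epsilon> < e0 \<and> - pi \<le> \<eta> \<and> \<eta> \<le> pi \<and>
       U \<in> H_eta \<omega> \<gamma>D \<eta> \<and> H1_grad (Cyl \<omega>) U G1 G2 G3"
    hence eps: "0 < \<epsilon>" "\<epsilon> < e0" and HG: "H1_grad (Cyl \<omega>) U G1 G2 G3" by auto
    define \<Omega> where "\<Omega> = Cyl \<omega>"
    define f where "f = (\<lambda>x. (cmod (G1 x))\<^sup>2 + (cmod (G2 x))\<^sup>2 + (cmod (G3 x))\<^sup>2)"
    define g where "g = (\<lambda>x. (cmod (G1 x))\<^sup>2 + (cmod (G2 x))\<^sup>2 +
      (cmod (G3 x + complex_of_real (\<epsilon> * bd (snd x)) *
               (complex_of_real (fst x $ 1) * G2 x - complex_of_real (fst x $ 2) * G1 x)))\<^sup>2)"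
    have small: "\<bar>\<epsilon> * bd (snd x) * (fst x $ i)\<bar> \<le> 1/2" if "x \<in> \<Omega>" for x i
    proof -
      have x: "fst x \<in> \<omega>" "snd x \<in> {0..1}" using that unfolding \<Omega>_def Cyl_def by auto
      have "\<bar>fst x $ i\<bar> \<le> R" using R(2)[OF x(1)] component_le_norm_cart order_trans by blast
      moreover have "\<bar>bd (snd x)\<bar> \<le> B" using B(2)[OF x(2)] by simp
      ultimately have "\<bar>bd (snd x) * (fst x $ i)\<bar> \<le> B*R"
        by (simp add: abs_mult mult_mono)
      hence "\<bar>\<epsilon> * bd (snd x) * (fst x $ i)\<bar> \<le> \<epsilon> * (B*R)"
        using eps by (simp add: abs_mult mult.assoc mult_left_mono)
      also have "\<dots> \<le> e0 * (B*R+1)" using eps BR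
        by (smt (verit, best) mult_left_mono mult_strict_right_mono)
      also have "\<dots> = 1/2" unfolding e0_def using BR by (simp add: field_simps)
      finally show ?thesis .
    qed
    have lo: "1/2 * f x \<le> g x" and up: "g x \<le> 2 * f x" if "x \<in> \<Omega>" for x
      unfolding f_def g_def using pw[OF small[OF that, of 1] small[OF that, of 2]] by auto
    have L: "L2_on \<Omega> G1" "L2_on \<Omega> G2" "L2_on \<Omega> G3"
      using HG unfolding H1_grad_def \<Omega>_def by auto
    have fi: "set_integrable lborel \<Omega> f"
      unfolding f_def using L unfolding L2_on_def by (intro set_integral_add) auto
    have meas: "set_borel_measurable lborel \<Omega> g"
    proof -
      define H1 where "H1 = (\<lambda>x. indicator \<Omega> x *\<^sub>R G1 x)"
      define H2 where "H2 = (\<lambda>x. indicator \<Omega> x *\<^sub>R G2 x)"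
      define H3 where "H3 = (\<lambda>x. indicator \<Omega> x *\<^sub>R G3 x)"
      have [measurable]: "H1 \<in> borel_measurable lborel" "H2 \<in> borel_measurable lborel"
        "H3 \<in> borel_measurable lborel"
        using L unfolding L2_on_def set_borel_measurable_def H1_def H2_def H3_def by auto
      have [measurable]: "bd \<in> borel_measurable borel" using cbd by (rule borel_measurable_continuous_onI)
      have [measurable]: "(\<lambda>x::pt. fst x $ i) \<in> borel_measurable lborel" for i
        unfolding measurable_lborel2 by (intro borel_measurable_continuous_onI continuous_intros)
      have [measurable]: "(\<lambda>x::pt. snd x) \<in> borel_measurable lborel"
        unfolding measurable_lborel2 by (intro borel_measurable_continuous_onI continuous_intros)
      define g' where "g' = (\<lambda>x. (cmod (H1 x))\<^sup>2 + (cmod (H2 x))\<^sup>2 +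
      (cmod (H3 x + complex_of_real (\<epsilon> * bd (snd x)) *
               (complex_of_real (fst x $ 1) * H2 x - complex_of_real (fst x $ 2) * H1 x)))\<^sup>2)"
      have "g' \<in> borel_measurable lborel" unfolding g'_def by measurable
      moreover have "g' = (\<lambda>x. indicator \<Omega> x *\<^sub>R g x)"
        by (rule ext) (simp add: g'_def g_def H1_def H2_def H3_def indicator_def)
      ultimately show ?thesis unfolding set_borel_measurable_def by simp
    qed
    have gi: "set_integrable lborel \<Omega> g"
    proof (rule set_integrable_bound[OF _ meas])
      show "set_integrable lborel \<Omega> (\<lambda>x. 2 * f x)" using fi by simp
      show "AE x in lborel. x \<in> \<Omega> \<longrightarrow> norm (g x) \<le> norm (2 * f x)"
      proof (intro AE_I2 impI)
        fix x assume "x \<in> \<Omega>"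
        moreover have "0 \<le> g x" "0 \<le> f x" unfolding g_def f_def by auto
        ultimately show "norm (g x) \<le> norm (2 * f x)" using up by simp
      qed
    qed
    have "(LINT x:\<Omega>|lborel. 1/2 * f x) \<le> (LINT x:\<Omega>|lborel. g x)"
      using fi gi lo by (intro set_integral_mono) auto
    thus "a_form \<omega> \<epsilon> bd G1 G2 G3 \<ge> 1/2 * grad_norm_sq \<omega> G1 G2 G3"
      unfolding a_form_def grad_norm_sq_def \<Omega>_def[symmetric] f_def[symmetric] g_def[symmetric]
      by simp
  qed
qed

end
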